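(* The set $\mathbb{R}_\mathcal{I}$ of interval numbers, equipped with the addition $\bar a+\bar b=\langle a_c+b_c;\,a_wb_w\rangle$ and the scalar multiplication $k\bar a=\langle ka_c;\,a_w^{k}\rangle$ ($k\in\mathbb{R}$), is a (real) linear space.
   Context: An interval number is a closed interval $\bar a=[a_l,a_r]$ with $a_l,a_r\in\mathbb{R}$ and $a_l<a_r$ (real numbers are not regarded as degenerate intervals). $\mathbb{R}_\mathcal{I}$ denotes the set of all interval numbers. For $\bar a=[a_l,a_r]$ put $a_c=(a_l+a_r)/2$ (center) and $a_w=(a_r-a_l)/2>0$ (radius), and write $\bar a=\langle a_c;a_w\rangle$, i.e. $\langle a_c;a_w\rangle=[a_c-a_w,a_c+a_w]$. *)

theory Defs
  imports "HOL-Analysis.Analysis" "HOL-Algebra.Module"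
begin

text \<open>An interval number [l, r] is represented by the pair of its endpoints (l, r), with l < r.\<close>
type_synonym interval = "real \<times> real"

definition RI :: "interval set" where
  "RI = {(l, r). l < r}"

definition icenter :: "interval \<Rightarrow> real" where
  "icenter a = (fst a + snd a) / 2"

definition iradius :: "interval \<Rightarrow> real" where
  "iradius a = (snd a - fst a) / 2"

definition cw :: "real \<Rightarrow> real \<Rightarrow> interval" where
  "cw c w = (c - w, c + w)"

definition iadd :: "interval \<Rightarrow> interval \<Rightarrow> interval" where
  "iadd a b = cw (icenter a + icenter b) (iradius a * iradius b)"

definition ismult :: "real \<Rightarrow> interval \<Rightarrow> interval" where
  "ismult k a = cw (k * icenter a) (iradius a powr k)"

definition real_field :: "real ring" where
  "real_field = \<lparr>carrier = UNIV, mult = (*), one = 1, zero = 0, add = (+)\<rparr>"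

text \<open>The multiplicative fields of the
  record are irrelevant for the module structure and left unspecified; the zero is
  the neutral element <0;1> = [-1,1].\<close>
definition interval_space :: "(real, interval) module" where
  "interval_space = \<lparr>carrier = RI, mult = (\<lambda>_ _. undefined), one = undefined,
     zero = cw 0 1, add = iadd, smult = ismult\<rparr>"

end

theory Submission
  imports Defs
begin

lemma rf_cring: "cring real_field"
proof (rule cringI)
  show "abelian_group real_field"
    by (rule abelian_groupI) (auto simp: real_field_def intro: exI[of _ "- x" for x])
  show "comm_monoid real_field"
    by (rule comm_monoidI) (auto simp: real_field_def)
qed (auto simp: real_field_def algebra_simps)

lemma rf_field: "field real_field"
proof -
  interpret cring real_field by (rule rf_cring)
  show ?thesis
  proof (rule field_intro2)
    show "\<zero>\<^bsub>real_field\<^esub> \<noteq> \<one>\<^bsub>real_field\<^esub>" by (simp add: real_field_def)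
    fix x assume x: "x \<in> carrier real_field - {\<zero>\<^bsub>real_field\<^esub>}"
    then have "x \<noteq> 0" by (simp add: real_field_def)
    then show "x \<in> Units real_field"
      unfolding Units_def by (auto simp: real_field_def intro!: exI[of _ "inverse x"])
  qed
qed

lemma cw_eq: "icenter (cw c w) = c" "iradius (cw c w) = w"
  by (auto simp: cw_def icenter_def iradius_def)

lemma cw_inv: "cw (icenter a) (iradius a) = a"
  by (cases a) (auto simp: cw_def icenter_def iradius_def field_simps)

lemma RI_iff: "a \<in> RI \<longleftrightarrow> iradius a > 0"
  by (cases a) (auto simp: RI_def iradius_def)

lemma cw_RI: "w > 0 \<Longrightarrow> cw c w \<in> RI"
  by (simp add: RI_iff cw_eq)

lemma abgrp: "abelian_group interval_space"
proof (rule abelian_groupI, goal_cases)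
  case (1 x y) then show ?case
    by (auto simp: interval_space_def iadd_def RI_iff cw_eq)
next
  case 2 then show ?case by (simp add: interval_space_def cw_RI)
next
  case (3 x y z) then show ?case
    by (simp add: interval_space_def iadd_def cw_eq algebra_simps)
next
  case (4 x y) then show ?case
    by (simp add: interval_space_def iadd_def cw_eq algebra_simps)
next
  case (5 x) then show ?case
    by (simp add: interval_space_def iadd_def cw_eq cw_inv)
next
  case (6 x)
  then have p: "iradius x > 0" by (simp add: interval_space_def RI_iff)
  show ?case
    by (rule bexI[of _ "cw (- icenter x) (1 / iradius x)"])
       (use p in \<open>auto simp: interval_space_def iadd_def cw_eq cw_RI\<close>)
qed

theorem theorem2p41:
  shows "field real_field \<and> module real_field interval_space"
proof
  show "field real_field" by (rule rf_field)
  show "module real_field interval_space"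
  proof (rule moduleI[OF rf_cring abgrp], goal_cases)
    case (1 a x) then show ?case
      by (auto simp: interval_space_def ismult_def RI_iff cw_eq)
  next
    case (2 a b x)
    then have p: "iradius x > 0" by (simp add: interval_space_def RI_iff)
    then show ?case
      by (simp add: interval_space_def real_field_def ismult_def iadd_def cw_eq
          powr_add algebra_simps)
  next
    case (3 a x y)
    then have p: "iradius x > 0" "iradius y > 0" by (simp_all add: interval_space_def RI_iff)
    then show ?case
      by (simp add: interval_space_def real_field_def ismult_def iadd_def cw_eq
          powr_mult algebra_simps)
  next
    case (4 a b x)
    then have p: "iradius x > 0" by (simp add: interval_space_def RI_iff)
    then show ?case
      by (simp add: interval_space_def real_field_def ismult_def cw_eq
          powr_powr algebra_simps)
  next
    case (5 x)
    then have p: "iradius x > 0" by (simp add: interval_space_def RI_iff)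
    then show ?case
      by (simp add: interval_space_def real_field_def ismult_def cw_eq cw_inv)
  qed
qed

end
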